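(* For every countable ordinal $\alpha$: $\mathfrak{D}_{\alpha+1} = \mathfrak{D}(\overline{\mathfrak{D}_\alpha})$, and more generally, for every countable ordinal $\alpha \geq 1$, $\mathfrak{D}_{\alpha} = \mathfrak{D}\left(\overline{\bigcup_{\lambda < \alpha} \mathfrak{D}_\lambda}\right)$.
   Context: All sets are subsets of Cantor space $\{0,1\}^\mathbb{N}$. For a countable ordinal $\alpha$, let $\mathrm{par}(\alpha)=0$ if $\alpha=\beta+2n$ for some limit ordinal $\beta$ (with $0$ counted as a limit) and some $n\in\mathbb{N}$, and $\mathrm{par}(\alpha)=1$ otherwise. The class $\mathfrak{D}_\alpha$ (level $\alpha$ of the Hausdorff difference hierarchy) consists of all sets $D$ for which there is a family $(U_\lambda)_{\lambda<\alpha}$ of open sets with: $x\in D \iff \mathrm{par}(\inf\{\beta \mid x\in U_\beta\})\neq \mathrm{par}(\alpha)$, where $\inf\emptyset=\alpha$. (So $\mathfrak{D}_0=\{\emptyset\}$, $\mathfrak{D}_1$ = open sets.) For a class $\Gamma$ of sets, $\overline{\Gamma}=\{U^C \mid U\in\Gamma\}$, and $\mathfrak{D}(\Gamma)$ is the class of all sets $\bigcup_{i\in I} v_iU_i$ where $I\subseteq\mathbb{N}$, each $v_i\in\{0,1\}^*$, each $U_i\in\Gamma$, the words $v_i$ are pairwise prefix-incomparable, and $vU=\{vp\mid p\in U\}$. *)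

theory Defs
  imports "HOL-Analysis.Analysis" "HOL-Library.Sublist" "HOL-Library.Countable"
begin

text \<open>Cantor space: the type nat \<Rightarrow> bool with the product topology of the
discrete (order) topology on bool (library instance from Function_Topology).
Countable ordinals: ordinals are represented as elements of an arbitrary
countable well-ordered type; the ordinal represented by a is the order type of
the initial segment of elements below a.\<close>

type_synonym cantor = "nat \<Rightarrow> bool"

definition is_succ :: "'a::wellorder \<Rightarrow> 'a \<Rightarrow> bool" where
  "is_succ x y \<longleftrightarrow> x < y \<and> \<not> (\<exists>z. x < z \<and> z < y)"

text \<open>Limit ordinal (0 counted as limit): no immediate predecessor.\<close>
definition is_limit :: "'a::wellorder \<Rightarrow> bool" where
  "is_limit l \<longleftrightarrow> \<not> (\<exists>x. is_succ x l)"

inductive plus_fin :: "'a::wellorder \<Rightarrow> nat \<Rightarrow> 'a \<Rightarrow> bool" where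
  base: "plus_fin l 0 l"
| step: "plus_fin l n x \<Longrightarrow> is_succ x y \<Longrightarrow> plus_fin l (Suc n) y"

definition par :: "'a::wellorder \<Rightarrow> nat" where
  "par b = (if \<exists>l n. is_limit l \<and> even n \<and> plus_fin l n b then 0 else 1)"

definition rank_in :: "('a::wellorder \<Rightarrow> cantor set) \<Rightarrow> 'a \<Rightarrow> cantor \<Rightarrow> 'a" where
  "rank_in U a x = (if \<exists>b<a. x \<in> U b then (LEAST b. b < a \<and> x \<in> U b) else a)"

definition Diff_level :: "'a::{wellorder,countable} \<Rightarrow> cantor set set" where
  "Diff_level a = {D. \<exists>U. (\<forall>b<a. open (U b)) \<and>
       D = {x. par (rank_in U a x) \<noteq> par a}}"

definition co_class :: "cantor set set \<Rightarrow> cantor set set" where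
  "co_class \<Gamma> = {- U | U. U \<in> \<Gamma>}"

definition prepend :: "bool list \<Rightarrow> cantor \<Rightarrow> cantor" where
  "prepend v p = (\<lambda>n. if n < length v then v ! n else p (n - length v))"

definition D_of :: "cantor set set \<Rightarrow> cantor set set" where
  "D_of \<Gamma> = {(\<Union>i\<in>I. prepend (v i) ` (U i)) | I v U.
       I \<subseteq> (UNIV :: nat set) \<and> (\<forall>i\<in>I. U i \<in> \<Gamma>) \<and>
       (\<forall>i\<in>I. \<forall>j\<in>I. i \<noteq> j \<longrightarrow> \<not> prefix (v i) (v j) \<and> \<not> prefix (v j) (v i))}"

end

theory Submission
  imports Defs
begin

definition cyl :: "bool list \<Rightarrow> cantor set" where "cyl w = {y. \<forall>k<length w. y k = w ! k}"
definition pre :: "nat \<Rightarrow> cantor \<Rightarrow> bool list" where "pre n x = map x [0..<n]"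

lemma open_cyl: "open (cyl w)"
proof -
  have "cyl w = {f. \<forall>i\<in>{..<length w}. f (id i) \<in> {w!i}}" by (auto simp: cyl_def)
  moreover have "open {f::cantor. \<forall>i\<in>{..<length w}. f (id i) \<in> {w!i}}"
    by (rule product_topology_basis') (auto simp: open_discrete)
  ultimately show ?thesis by simp
qed

lemma cyl_pre_self: "x \<in> cyl (pre n x)" by (simp add: cyl_def pre_def)

lemma open_cantor_iff: "open (U::cantor set) \<longleftrightarrow> (\<forall>x\<in>U. \<exists>n. cyl (pre n x) \<subseteq> U)"
proof
  assume "open U"
  show "\<forall>x\<in>U. \<exists>n. cyl (pre n x) \<subseteq> U"
  proof
    fix x assume "x \<in> U"
    from \<open>open U\<close> have "openin (product_topology (\<lambda>i. euclidean) UNIV) U" by (simp add: open_fun_def)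
    then obtain V where fin: "finite {i. V i \<noteq> (UNIV::bool set)}" and xin: "x \<in> PiE UNIV V" and sub: "PiE UNIV V \<subseteq> U"
      using \<open>x\<in>U\<close> unfolding openin_product_topology_alt by auto
    from finite_nat_bounded[OF fin] obtain n where n: "{i. V i \<noteq> UNIV} \<subseteq> {..<n}" by blast
    have "cyl (pre n x) \<subseteq> U"
    proof
      fix y assume "y \<in> cyl (pre n x)"
      hence yx: "\<forall>k<n. y k = x k" by (simp add: cyl_def pre_def)
      have "y \<in> PiE UNIV V"
      proof -
        have "y i \<in> V i" for i
        proof (cases "i < n")
          case True then show ?thesis using xin yx by (auto simp: PiE_UNIV_domain)
        next
          case False then show ?thesis using n by auto
        qed
        then show ?thesis by (simp add: PiE_UNIV_domain)
      qed
      then show "y \<in> U" using sub by blast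
    qed
    then show "\<exists>n. cyl (pre n x) \<subseteq> U" by blast
  qed
next
  assume H: "\<forall>x\<in>U. \<exists>n. cyl (pre n x) \<subseteq> U"
  show "open U"
  proof (subst open_subopen, intro ballI)
    fix x assume "x \<in> U"
    then obtain n where "cyl (pre n x) \<subseteq> U" using H by blast
    then show "\<exists>T. open T \<and> x \<in> T \<and> T \<subseteq> U" using cyl_pre_self open_cyl by blast
  qed
qed


lemma prepend_nth: "prepend v p n = (if n < length v then v ! n else p (n - length v))"
  by (simp add: prepend_def)

lemma prepend_inj: "prepend w p = prepend w q \<Longrightarrow> p = q"
proof
  fix n assume "prepend w p = prepend w q"
  then have "prepend w p (n + length w) = prepend w q (n + length w)" by simp
  then show "p n = q n" by (simp add: prepend_def)
qed

lemma prepend_prefix: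
  assumes "length v \<le> length w" "prepend v p = prepend w q" shows "prefix v w"
proof -
  have "v = take (length v) w"
  proof (rule nth_equalityI)
    show "length v = length (take (length v) w)" using assms(1) by simp
    fix k assume "k < length v"
    then have "prepend v p k = prepend w q k" using assms(2) by simp
    then show "v ! k = take (length v) w ! k" using \<open>k < length v\<close> assms(1)
      by (simp add: prepend_def)
  qed
  then show ?thesis by (metis take_is_prefix)
qed

lemma prepend_cases: "prepend v p = prepend w q \<Longrightarrow> prefix v w \<or> prefix w v"
proof (cases "length v \<le> length w")
  case True
  assume "prepend v p = prepend w q" then show ?thesis using prepend_prefix[OF True] by blast
next
  case False
  then have "length w \<le> length v" by simp
  assume "prepend v p = prepend w q" then show ?thesis using prepend_prefix[OF \<open>length w \<le> length v\<close>, of q p] by simp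
qed


lemma open_prepend_image:
  assumes "open (V::cantor set)" shows "open (prepend v ` V)"
  unfolding open_cantor_iff
proof
  fix y assume "y \<in> prepend v ` V"
  then obtain p where p: "p \<in> V" "y = prepend v p" by blast
  then obtain n where n: "cyl (pre n p) \<subseteq> V" using assms open_cantor_iff by blast
  have "cyl (pre (length v + n) y) \<subseteq> prepend v ` V"
  proof
    fix z assume "z \<in> cyl (pre (length v + n) y)"
    then have zy: "\<forall>k<length v + n. z k = y k" by (simp add: cyl_def pre_def)
    define q where "q = (\<lambda>k. z (k + length v))"
    have "z = prepend v q"
    proof
      fix k show "z k = prepend v q k"
        using zy[rule_format, of k] p(2) by (auto simp: q_def prepend_def)
    qed
    moreover have "q \<in> cyl (pre n p)"
      using zy p(2) by (auto simp: cyl_def pre_def q_def prepend_def)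
    ultimately show "z \<in> prepend v ` V" using n by blast
  qed
  then show "\<exists>n. cyl (pre n y) \<subseteq> prepend v ` V" by blast
qed

lemma open_prepend_vimage:
  assumes "open (U::cantor set)" shows "open (prepend w -` U)"
  unfolding open_cantor_iff
proof
  fix p assume "p \<in> prepend w -` U"
  then obtain n where n: "cyl (pre n (prepend w p)) \<subseteq> U" using assms open_cantor_iff by blast
  have "cyl (pre n p) \<subseteq> prepend w -` U"
  proof
    fix q assume "q \<in> cyl (pre n p)"
    then have "\<forall>k<n. q k = p k" by (simp add: cyl_def pre_def)
    then have "prepend w q \<in> cyl (pre n (prepend w p))"
      by (auto simp: cyl_def pre_def prepend_def)
    then show "q \<in> prepend w -` U" using n by blast
  qed
  then show "\<exists>n. cyl (pre n p) \<subseteq> prepend w -` U" by blast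
qed


lemma cyl_pre: "cyl (pre n x) = {y. \<forall>k<n. y k = x k}"
  by (simp add: cyl_def pre_def)

lemma prepend_pre: "prepend (pre k x) (\<lambda>n. x (n + k)) = x"
  by (auto simp: prepend_def pre_def)

lemma strict_prefix_pre: "strict_prefix u (pre k x) \<Longrightarrow> \<exists>j<k. u = pre j x"
proof -
  assume a: "strict_prefix u (pre k x)"
  then obtain zs where zs: "pre k x = u @ zs" by (auto simp: strict_prefix_def prefix_def)
  have lk: "length u < k" using prefix_length_less[OF a] by (simp add: pre_def)
  have "u = take (length u) (pre k x)" using zs by simp
  also have "\<dots> = pre (length u) x" using lk by (simp add: pre_def take_map take_upt)
  finally show ?thesis using lk by blast
qed

lemma prepend_in_cyl: "prepend w p \<in> cyl w" by (simp add: cyl_def prepend_def)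


lemma succ_unique: "is_succ (x::'a::wellorder) y \<Longrightarrow> is_succ x y' \<Longrightarrow> y = y'"
proof (rule ccontr)
  assume a: "is_succ x y" "is_succ x y'" "y \<noteq> y'"
  then have "y < y' \<or> y' < y" by auto
  then show False using a(1,2) unfolding is_succ_def by blast
qed

lemma pred_unique: "is_succ (x::'a::wellorder) y \<Longrightarrow> is_succ x' y \<Longrightarrow> x = x'"
proof (rule ccontr)
  assume a: "is_succ x y" "is_succ x' y" "x \<noteq> x'"
  then have "x < x' \<or> x' < x" by auto
  then show False using a(1,2) unfolding is_succ_def by blast
qed

lemma is_succ_less: "is_succ (b::'a::wellorder) b' \<Longrightarrow> c < b' \<longleftrightarrow> c \<le> b"
proof -
  assume a: "is_succ b b'"
  then have "b < b'" "\<not> (b < c \<and> c < b')" for c unfolding is_succ_def by auto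
  then show ?thesis by (meson le_less_trans not_le)
qed

lemma succ_ex: "(b::'a::wellorder) < a \<Longrightarrow> \<exists>b'. is_succ b b' \<and> b' \<le> a"
proof -
  assume "b < a"
  define s where "s = (LEAST z. b < z)"
  have "b < s" unfolding s_def by (rule LeastI[of _ a]) (fact \<open>b<a\<close>)
  moreover have "s \<le> a" unfolding s_def using \<open>b<a\<close> by (rule Least_le)
  moreover have "\<not>(\<exists>z. b < z \<and> z < s)" unfolding s_def using not_less_Least by blast
  ultimately show ?thesis unfolding is_succ_def by blast
qed

lemma plus_fin_ex: "\<exists>l n. is_limit l \<and> plus_fin l n (b::'a::wellorder)"
proof (induction b rule: less_induct)
  case (less b)
  show ?case
  proof (cases "is_limit b")
    case True then show ?thesis using plus_fin.base by blast
  next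
    case False
    then obtain x where x: "is_succ x b" unfolding is_limit_def by blast
    then have "x < b" unfolding is_succ_def by simp
    then obtain l n where "is_limit l" "plus_fin l n x" using less by blast
    then show ?thesis using plus_fin.step[OF _ x] by blast
  qed
qed

lemma plus_fin_unique:
  "plus_fin l n (b::'a::wellorder) \<Longrightarrow> is_limit l \<Longrightarrow> plus_fin l' n' b \<Longrightarrow> is_limit l' \<Longrightarrow> n = n'"
proof (induction arbitrary: n' rule: plus_fin.induct)
  case (base l)
  from base(2) show ?case
  proof cases
    case base then show ?thesis by simp
  next
    case (step n x) then show ?thesis using base(1) unfolding is_limit_def by blast
  qed
next
  case (step l n x y)
  from step.prems(2) show ?case
  proof cases
    case base then show ?thesis using step.hyps(2) step.prems(3) unfolding is_limit_def by blast
  next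
    case (step m x')
    then have "x' = x" using pred_unique \<open>is_succ x y\<close> by blast
    then have "n = m" using step.IH step.prems(1,3) \<open>plus_fin l' m x'\<close> by blast
    then show ?thesis using step by simp
  qed
qed

lemma par_eq: "is_limit l \<Longrightarrow> plus_fin l n (b::'a::wellorder) \<Longrightarrow> par b = (if even n then 0 else 1)"
proof (cases "even n")
  case True
  assume "is_limit l" "plus_fin l n b"
  then show ?thesis using True unfolding par_def by auto
next
  case False
  assume a: "is_limit l" "plus_fin l n b"
  have "\<not> (\<exists>l' n'. is_limit l' \<and> even n' \<and> plus_fin l' n' b)"
  proof
    assume "\<exists>l' n'. is_limit l' \<and> even n' \<and> plus_fin l' n' b"
    then obtain l' n' where "is_limit l'" "even n'" "plus_fin l' n' b" by blast
    then have "n = n'" using plus_fin_unique a by blast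
    then show False using False \<open>even n'\<close> by simp
  qed
  then show ?thesis using False unfolding par_def by auto
qed

lemma par_succ: "is_succ (b::'a::wellorder) b' \<Longrightarrow> par b' \<noteq> par b"
proof -
  assume s: "is_succ b b'"
  obtain l n where ln: "is_limit l" "plus_fin l n b" using plus_fin_ex by blast
  have "plus_fin l (Suc n) b'" using plus_fin.step[OF ln(2) s] .
  then show ?thesis using par_eq[OF ln] par_eq[OF ln(1)] by simp
qed

lemma par_01: "par b = 0 \<or> par b = 1" by (simp add: par_def)

lemma par_succ': "is_succ (b::'a::wellorder) b' \<Longrightarrow> par x \<noteq> par b' \<longleftrightarrow> par x = par b"
  using par_succ[of b b'] par_01[of x] par_01[of b] par_01[of b'] by auto


lemma rank_props:
  fixes U :: "'a::wellorder \<Rightarrow> cantor set"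
  shows "rank_in U a x \<le> a" "rank_in U a x < a \<Longrightarrow> x \<in> U (rank_in U a x)"
    "c < rank_in U a x \<Longrightarrow> x \<notin> U c"
proof -
  have "rank_in U a x \<le> a \<and> (rank_in U a x < a \<longrightarrow> x \<in> U (rank_in U a x)) \<and>
        (\<forall>c. c < rank_in U a x \<longrightarrow> x \<notin> U c)"
  proof (cases "\<exists>b<a. x \<in> U b")
    case True
    define r where "r = (LEAST b. b < a \<and> x \<in> U b)"
    have r: "rank_in U a x = r" using True by (simp add: rank_in_def r_def)
    have r1: "r < a \<and> x \<in> U r" unfolding r_def using True by (metis (mono_tags, lifting) LeastI)
    have r2: "x \<notin> U c" if "c < r" for c
    proof -
      have "\<not> (c < a \<and> x \<in> U c)" using not_less_Least[OF that[unfolded r_def]] .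
      moreover have "c < a" using that r1 less_trans by blast
      ultimately show ?thesis by blast
    qed
    show ?thesis using r r1 r2 by auto
  next
    case False
    have "rank_in U a x = a" unfolding rank_in_def by (rule if_not_P[OF False])
    then show ?thesis using False by auto
  qed
  then show "rank_in U a x \<le> a" "rank_in U a x < a \<Longrightarrow> x \<in> U (rank_in U a x)"
    "c < rank_in U a x \<Longrightarrow> x \<notin> U c" by auto
qed

lemma rank_eqI:
  fixes U :: "'a::wellorder \<Rightarrow> cantor set"
  assumes "r \<le> a" "r < a \<Longrightarrow> x \<in> U r" "\<And>c. c < r \<Longrightarrow> x \<notin> U c"
  shows "rank_in U a x = r"
proof (rule ccontr)
  let ?s = "rank_in U a x"
  assume "?s \<noteq> r"
  then have "?s < r \<or> r < ?s" by auto
  then show False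
  proof
    assume "?s < r"
    then have "?s < a" using assms(1) by simp
    then have "x \<in> U ?s" by (rule rank_props)
    then show False using assms(3) \<open>?s < r\<close> by blast
  next
    assume "r < ?s"
    then have "r < a" using rank_props(1)[of U a x] by simp
    then have "x \<in> U r" by (rule assms(2))
    then show False using rank_props(3)[OF \<open>r < ?s\<close>] by blast
  qed
qed

lemma rank_cong:
  fixes U V :: "'a::wellorder \<Rightarrow> cantor set"
  assumes "\<And>b. b < a \<Longrightarrow> x \<in> U b \<longleftrightarrow> y \<in> V b"
  shows "rank_in U a x = rank_in V a y"
proof (rule rank_eqI)
  let ?r = "rank_in V a y"
  show "?r \<le> a" by (rule rank_props)
  show "x \<in> U ?r" if "?r < a" using rank_props(2)[OF that] assms[OF that] by blast
  fix c assume "c < ?r"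
  then have "c < a" using rank_props(1)[of V a y] by simp
  then show "x \<notin> U c" using rank_props(3)[OF \<open>c < ?r\<close>] assms by blast
qed

lemma Diff_level_iff:
  "S \<in> Diff_level a \<longleftrightarrow> (\<exists>U. (\<forall>b<a. open (U b)) \<and> S = {x. par (rank_in U a x) \<noteq> par a})"
  by (simp add: Diff_level_def)

lemma co_succ:
  fixes b b' :: "'a::{wellorder,countable}"
  assumes s: "is_succ b b'" and S: "S \<in> Diff_level b"
  shows "- S \<in> Diff_level b'"
proof -
  obtain U where U: "\<forall>c<b. open (U c)" "S = {x. par (rank_in U b x) \<noteq> par b}"
    using S Diff_level_iff by blast
  define U' where "U' = (\<lambda>c. if c < b then U c else UNIV)"
  have bb: "b < b'" using s by (simp add: is_succ_def)
  have rk: "rank_in U' b' x = rank_in U b x" for x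
  proof (rule rank_eqI)
    let ?r = "rank_in U b x"
    show "?r \<le> b'" using rank_props(1)[of U b x] bb by simp
    show "x \<in> U' ?r" if "?r < b'"
    proof (cases "?r < b")
      case True then show ?thesis using rank_props(2)[OF True] by (simp add: U'_def)
    next
      case False then show ?thesis by (simp add: U'_def)
    qed
    fix c assume "c < ?r"
    then have "c < b" using rank_props(1)[of U b x] by simp
    then show "x \<notin> U' c" using rank_props(3)[OF \<open>c < ?r\<close>] by (simp add: U'_def)
  qed
  have "- S = {x. par (rank_in U' b' x) \<noteq> par b'}"
    using U(2) rk par_succ'[OF s] by auto
  moreover have "\<forall>c<b'. open (U' c)" using U(1) by (simp add: U'_def)
  ultimately show ?thesis using Diff_level_iff by blast
qed

lemma pad:
  fixes c a :: "'a::{wellorder,countable}"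
  assumes ca: "c \<le> a" and p: "par c = par a" and S: "S \<in> Diff_level c"
  shows "S \<in> Diff_level a"
proof -
  obtain U where U: "\<forall>d<c. open (U d)" "S = {x. par (rank_in U c x) \<noteq> par c}"
    using S Diff_level_iff by blast
  define U' where "U' = (\<lambda>d. if d < c then U d else {})"
  have rk: "rank_in U' a x = (if rank_in U c x < c then rank_in U c x else a)" for x
  proof (rule rank_eqI)
    let ?r = "rank_in U c x"
    let ?r' = "if ?r < c then ?r else a"
    show "?r' \<le> a" using ca by auto
    show "x \<in> U' ?r'" if "?r' < a"
    proof -
      have "?r < c" using that by (auto split: if_splits)
      then show ?thesis using rank_props(2)[OF \<open>?r < c\<close>] by (simp add: U'_def)
    qed
    fix d assume d: "d < ?r'"
    show "x \<notin> U' d"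
    proof (cases "d < c")
      case True
      have "d < ?r"
      proof (cases "?r < c")
        case True then show ?thesis using d by simp
      next
        case False then have "?r = c" using rank_props(1)[of U c x] by simp
        then show ?thesis using \<open>d < c\<close> by simp
      qed
      then show ?thesis using rank_props(3)[OF \<open>d < ?r\<close>] by (simp add: U'_def)
    next
      case False then show ?thesis by (simp add: U'_def)
    qed
  qed
  have "S = {x. par (rank_in U' a x) \<noteq> par a}"
  proof -
    have "par (rank_in U c x) \<noteq> par c \<longleftrightarrow> par (rank_in U' a x) \<noteq> par a" for x
    proof (cases "rank_in U c x < c")
      case True then show ?thesis using rk p by simp
    next
      case False then have "rank_in U c x = c" using rank_props(1)[of U c x] by simp
      then show ?thesis using rk by simp
    qed
    then show ?thesis using U(2) by auto
  qed
  moreover have "\<forall>d<a. open (U' d)" using U(1) by (simp add: U'_def)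
  ultimately show ?thesis using Diff_level_iff by blast
qed


lemma shift:
  fixes c c' :: "'a::{wellorder,countable}"
  assumes s: "is_succ c c'" and S: "S \<in> Diff_level c"
  shows "S \<in> Diff_level c'"
proof -
  obtain U where U: "\<forall>d<c. open (U d)" "S = {x. par (rank_in U c x) \<noteq> par c}"
    using S Diff_level_iff by blast
  define U' where "U' = (\<lambda>d. \<Union>{U e | e. is_succ e d \<and> e < c})"
  have cc: "c < c'" using s by (simp add: is_succ_def)
  have key: "par (rank_in U' c' x) \<noteq> par c' \<longleftrightarrow> par (rank_in U c x) \<noteq> par c" for x
  proof -
    let ?r = "rank_in U c x"
    have "?r < c'" using rank_props(1)[of U c x] cc by simp
    then obtain t where t: "is_succ ?r t" "t \<le> c'" using succ_ex by blast
    have "rank_in U' c' x = t"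
    proof (rule rank_eqI)
      show "t \<le> c'" by (fact t(2))
      show "x \<in> U' t" if "t < c'"
      proof -
        have "t \<le> c" using that is_succ_less[OF s] by simp
        moreover have "?r < t" using t(1) unfolding is_succ_def by simp
        ultimately have "?r < c" by simp
        then have "x \<in> U ?r" by (rule rank_props)
        then show ?thesis unfolding U'_def using t(1) \<open>?r < c\<close> by blast
      qed
      fix d assume "d < t"
      show "x \<notin> U' d"
      proof
        assume "x \<in> U' d"
        then obtain e where e: "is_succ e d" "e < c" "x \<in> U e" unfolding U'_def by blast
        have "\<not> e < ?r" using rank_props(3)[of e U c x] e(3) by blast
        moreover have "e < d" using e(1) unfolding is_succ_def by simp
        then have "e < t" using \<open>d < t\<close> by (rule less_trans)
        then have "e \<le> ?r" using is_succ_less[OF t(1)] by simp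
        ultimately have "e = ?r" by simp
        then have "?r < d" using e(1) unfolding is_succ_def by simp
        then show False using t(1) \<open>d < t\<close> unfolding is_succ_def by blast
      qed
    qed
    then show ?thesis
      using par_succ[OF t(1)] par_succ[OF s] par_01[of ?r] par_01[of t] par_01[of c] par_01[of c']
      by auto
  qed
  have "S = {x. par (rank_in U' c' x) \<noteq> par c'}" using U(2) key by auto
  moreover have "\<forall>d<c'. open (U' d)" unfolding U'_def using U(1) by (auto intro!: open_Union)
  ultimately show ?thesis using Diff_level_iff by blast
qed

lemma mono_level:
  fixes c a :: "'a::{wellorder,countable}"
  assumes "c \<le> a" shows "Diff_level c \<subseteq> Diff_level a"
proof
  fix S assume S: "S \<in> Diff_level c"
  show "S \<in> Diff_level a"
  proof (cases "par c = par a")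
    case True then show ?thesis using pad assms S by blast
  next
    case False
    then have "c \<noteq> a" by auto
    then have "c < a" using assms le_neq_trans by blast
    then obtain c' where c': "is_succ c c'" "c' \<le> a" using succ_ex by blast
    have "par c' = par a" using par_succ[OF c'(1)] False par_01[of c] par_01[of c'] par_01[of a] by auto
    then show ?thesis using pad[OF c'(2)] shift[OF c'(1) S] by blast
  qed
qed

lemma mem_prepend_union:
  assumes inc: "\<forall>i\<in>I. \<forall>j\<in>I. i \<noteq> j \<longrightarrow> \<not> prefix (v i) (v j) \<and> \<not> prefix (v j) (v i)"
    and i: "i \<in> I"
  shows "prepend (v i) p \<in> (\<Union>j\<in>I. prepend (v j) ` X j) \<longleftrightarrow> p \<in> X i"
proof
  assume "prepend (v i) p \<in> (\<Union>j\<in>I. prepend (v j) ` X j)"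
  then obtain j q where j: "j \<in> I" "q \<in> X j" "prepend (v i) p = prepend (v j) q" by blast
  have "j = i"
  proof (rule ccontr)
    assume "j \<noteq> i"
    then show False using prepend_cases[OF j(3)] inc i j(1) by blast
  qed
  then show "p \<in> X i" using prepend_inj j by blast
next
  assume "p \<in> X i" then show "prepend (v i) p \<in> (\<Union>j\<in>I. prepend (v j) ` X j)" using i by blast
qed

lemma D_of_iff:
  "S \<in> D_of \<Gamma> \<longleftrightarrow> (\<exists>I v U. S = (\<Union>i\<in>I. prepend (v i) ` (U i)) \<and>
       I \<subseteq> (UNIV :: nat set) \<and> (\<forall>i\<in>I. U i \<in> \<Gamma>) \<and>
       (\<forall>i\<in>I. \<forall>j\<in>I. i \<noteq> j \<longrightarrow> \<not> prefix (v i) (v j) \<and> \<not> prefix (v j) (v i)))"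
  unfolding D_of_def mem_Collect_eq by (rule refl)

lemma D_of_closed:
  fixes a :: "'a::{wellorder,countable}"
  shows "D_of (Diff_level a) \<subseteq> Diff_level a"
proof
  fix S assume "S \<in> D_of (Diff_level a)"
  then obtain I v W where S: "S = (\<Union>i\<in>I. prepend (v i) ` W i)" and "I \<subseteq> (UNIV :: nat set)"
    and W: "\<forall>i\<in>I. W i \<in> Diff_level a"
    and inc: "\<forall>i\<in>I. \<forall>j\<in>I. i \<noteq> j \<longrightarrow> \<not> prefix (v i) (v j) \<and> \<not> prefix (v j) (v i)"
    unfolding D_of_iff by (elim exE conjE) iprover
  have ex: "\<forall>i\<in>I. \<exists>U. (\<forall>b<a. open (U b)) \<and> W i = {x. par (rank_in U a x) \<noteq> par a}"
    using W Diff_level_iff by blast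
  then obtain F where F: "\<forall>i\<in>I. (\<forall>b<a. open (F i b)) \<and> W i = {x. par (rank_in (F i) a x) \<noteq> par a}"
    using bchoice[OF ex] by blast
  define U' where "U' = (\<lambda>b. \<Union>i\<in>I. prepend (v i) ` F i b)"
  have opn: "\<forall>b<a. open (U' b)"
  proof (intro allI impI)
    fix b assume "b < a"
    show "open (U' b)" unfolding U'_def
    proof (rule open_UN, intro ballI)
      fix i assume "i \<in> I"
      then have "open (F i b)" using F \<open>b < a\<close> by blast
      then show "open (prepend (v i) ` F i b)" by (rule open_prepend_image)
    qed
  qed
  have "S = {x. par (rank_in U' a x) \<noteq> par a}"
  proof (rule set_eqI)
    fix x
    show "x \<in> S \<longleftrightarrow> x \<in> {x. par (rank_in U' a x) \<noteq> par a}"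
    proof (cases "\<exists>i\<in>I. \<exists>p. x = prepend (v i) p")
      case True
      then obtain i p where ip: "i \<in> I" "x = prepend (v i) p" by blast
      have "rank_in U' a x = rank_in (F i) a p"
      proof (rule rank_cong)
        fix b assume "b < a"
        show "x \<in> U' b \<longleftrightarrow> p \<in> F i b" unfolding U'_def ip(2) by (rule mem_prepend_union[OF inc ip(1)])
      qed
      moreover have "x \<in> S \<longleftrightarrow> p \<in> W i" unfolding S ip(2) by (rule mem_prepend_union[OF inc ip(1)])
      ultimately show ?thesis using F ip(1) by auto
    next
      case False
      then have "x \<notin> S" unfolding S by blast
      moreover have "rank_in U' a x = a"
      proof (rule rank_eqI)
        fix c assume "c < a"
        show "x \<notin> U' c" unfolding U'_def using False by blast
      qed simp_all
      ultimately show ?thesis by simp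
    qed
  qed
  then show "S \<in> Diff_level a" using opn Diff_level_iff by blast
qed

lemma D_of_mono: "\<Gamma> \<subseteq> \<Delta> \<Longrightarrow> D_of \<Gamma> \<subseteq> D_of \<Delta>"
proof
  fix S assume g: "\<Gamma> \<subseteq> \<Delta>" and "S \<in> D_of \<Gamma>"
  then obtain I v W where h: "S = (\<Union>i\<in>I. prepend (v i) ` (W i))" "I \<subseteq> (UNIV :: nat set)" "\<forall>i\<in>I. W i \<in> \<Gamma>"
      "\<forall>i\<in>I. \<forall>j\<in>I. i \<noteq> j \<longrightarrow> \<not> prefix (v i) (v j) \<and> \<not> prefix (v j) (v i)"
    unfolding D_of_iff by (elim exE conjE) iprover
  have "\<forall>i\<in>I. W i \<in> \<Delta>" using h(3) g by blast
  then show "S \<in> D_of \<Delta>" unfolding D_of_iff using h(1,2,4) by blast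
qed


lemma co_classI: "X \<in> \<Gamma> \<Longrightarrow> - X \<in> co_class \<Gamma>"
  by (auto simp: co_class_def)

lemma main_sub:
  fixes a :: "'a::{wellorder,countable}"
  assumes S: "S \<in> Diff_level a"
  shows "S \<in> D_of (co_class (\<Union>b\<in>{b. b < a}. Diff_level b))"
proof -
  obtain U where U: "\<forall>b<a. open (U b)" "S = {x. par (rank_in U a x) \<noteq> par a}"
    using S Diff_level_iff by blast
  define W' where "W' = {w. \<exists>b<a. cyl w \<subseteq> U b}"
  define M where "M = {w \<in> W'. \<forall>u. strict_prefix u w \<longrightarrow> u \<notin> W'}"
  define I where "I = (to_nat :: bool list \<Rightarrow> nat) ` M"
  define v where "v = (from_nat :: nat \<Rightarrow> bool list)"
  define T where "T = (\<lambda>i. {p. prepend (v i) p \<in> S})"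
  have vI: "v i \<in> M" "to_nat (v i) = i" if "i \<in> I" for i
    using that by (auto simp: I_def v_def)
  have cover: "S = (\<Union>i\<in>I. prepend (v i) ` T i)"
  proof
    show "S \<subseteq> (\<Union>i\<in>I. prepend (v i) ` T i)"
    proof
      fix x assume x: "x \<in> S"
      let ?r = "rank_in U a x"
      have "?r \<noteq> a" using x U(2) by auto
      then have ra: "?r < a" using rank_props(1)[of U a x] le_neq_trans by blast
      then have "x \<in> U ?r" by (rule rank_props)
      moreover have "open (U ?r)" using U(1) ra by blast
      ultimately obtain n where "cyl (pre n x) \<subseteq> U ?r" using open_cantor_iff by blast
      then have n: "pre n x \<in> W'" using ra unfolding W'_def by blast
      define k where "k = (LEAST k. pre k x \<in> W')"
      have k1: "pre k x \<in> W'" unfolding k_def using n by (rule LeastI)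
      have "pre k x \<in> M"
      proof -
        have "u \<notin> W'" if sp: "strict_prefix u (pre k x)" for u
        proof -
          obtain j where j: "j < k" "u = pre j x" using strict_prefix_pre[OF sp] by blast
          have "\<not> pre j x \<in> W'" using not_less_Least[of j "\<lambda>k. pre k x \<in> W'"] j(1) k_def by blast
          then show ?thesis using j(2) by simp
        qed
        then show ?thesis using k1 unfolding M_def by blast
      qed
      then have i: "to_nat (pre k x) \<in> I" "v (to_nat (pre k x)) = pre k x"
        by (auto simp: I_def v_def)
      have "(\<lambda>m. x (m + k)) \<in> T (to_nat (pre k x))"
        unfolding T_def using i(2) prepend_pre[of k x] x by simp
      then have "prepend (v (to_nat (pre k x))) (\<lambda>m. x (m + k)) \<in> (\<Union>i\<in>I. prepend (v i) ` T i)"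
        using i(1) by blast
      then show "x \<in> (\<Union>i\<in>I. prepend (v i) ` T i)" using i(2) prepend_pre[of k x] by simp
    qed
    show "(\<Union>i\<in>I. prepend (v i) ` T i) \<subseteq> S" unfolding T_def by auto
  qed
  have Minc: "\<not> prefix w1 w2" if "w1 \<in> M" "w2 \<in> M" "w1 \<noteq> w2" for w1 w2
  proof
    assume "prefix w1 w2"
    then have "strict_prefix w1 w2" using that(3) by (rule strict_prefixI)
    then have "w1 \<notin> W'" using that(2) unfolding M_def by blast
    then show False using that(1) unfolding M_def by blast
  qed
  have inc: "\<forall>i\<in>I. \<forall>j\<in>I. i \<noteq> j \<longrightarrow> \<not> prefix (v i) (v j) \<and> \<not> prefix (v j) (v i)"
  proof (intro ballI impI)
    fix i j assume ij: "i \<in> I" "j \<in> I" "i \<noteq> j"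
    then have "v i \<noteq> v j" using vI by metis
    then show "\<not> prefix (v i) (v j) \<and> \<not> prefix (v j) (v i)" using Minc vI ij by metis
  qed
  have coT: "\<forall>i\<in>I. T i \<in> co_class (\<Union>b\<in>{b. b < a}. Diff_level b)"
  proof
    fix i assume "i \<in> I"
    define w where "w = v i"
    have "w \<in> W'" using vI(1)[OF \<open>i \<in> I\<close>] unfolding w_def M_def by blast
    then obtain m where m: "m < a" "cyl w \<subseteq> U m" unfolding W'_def by blast
    have rle: "rank_in U a (prepend w p) \<le> m" for p
    proof (rule ccontr)
      assume "\<not> rank_in U a (prepend w p) \<le> m"
      then have "m < rank_in U a (prepend w p)" by simp
      then have "prepend w p \<notin> U m" by (rule rank_props)
      then show False using m(2) prepend_in_cyl by blast
    qed
    obtain b where b: "b < a" "m \<le> b" "par b \<noteq> par a"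
    proof (cases "par m = par a")
      case False then show ?thesis using that m(1) by blast
    next
      case True
      obtain t where t: "is_succ m t" "t \<le> a" using succ_ex[OF m(1)] by blast
      have "par t \<noteq> par a" using par_succ[OF t(1)] True by simp
      then have "t \<noteq> a" by blast
      then have "t < a" using t(2) le_neq_trans by blast
      moreover have "m \<le> t" using t(1) unfolding is_succ_def by (simp add: less_imp_le)
      ultimately show ?thesis using that \<open>par t \<noteq> par a\<close> by blast
    qed
    define U'' where "U'' = (\<lambda>c. prepend w -` U c)"
    have rk: "rank_in U'' b p = rank_in U a (prepend w p)" for p
    proof (rule rank_eqI)
      let ?r = "rank_in U a (prepend w p)"
      show "?r \<le> b" using rle[of p] b(2) by simp
      show "p \<in> U'' ?r" if "?r < b"
      proof -
        have "?r < a" using that b(1) by simp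
        then show ?thesis using rank_props(2) by (simp add: U''_def)
      qed
      fix c assume "c < ?r"
      then show "p \<notin> U'' c" using rank_props(3) by (simp add: U''_def)
    qed
    have "- T i = {p. par (rank_in U'' b p) \<noteq> par b}"
    proof -
      have "p \<in> - T i \<longleftrightarrow> par (rank_in U'' b p) \<noteq> par b" for p
        using U(2) rk[of p] b(3) par_01[of b] par_01[of a] par_01[of "rank_in U a (prepend w p)"]
        unfolding T_def w_def by auto
      then show ?thesis by auto
    qed
    moreover have "\<forall>c<b. open (U'' c)"
      unfolding U''_def using U(1) b(1) open_prepend_vimage by simp
    ultimately have "- T i \<in> Diff_level b" using Diff_level_iff by blast
    then have "- T i \<in> (\<Union>b\<in>{b. b < a}. Diff_level b)" using b(1) by blast
    then have "- (- T i) \<in> co_class (\<Union>b\<in>{b. b < a}. Diff_level b)" by (rule co_classI)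
    then show "T i \<in> co_class (\<Union>b\<in>{b. b < a}. Diff_level b)" by simp
  qed
  show ?thesis unfolding D_of_iff
    by (rule exI[of _ I], rule exI[of _ v], rule exI[of _ T]) (intro conjI cover inc coT subset_UNIV)
qed

theorem lemma6:
  fixes dummy :: "'a::{wellorder,countable}"
  shows "(\<forall>a a' :: 'a. is_succ a a' \<longrightarrow> Diff_level a' = D_of (co_class (Diff_level a)))
       \<and> (\<forall>a :: 'a. (\<exists>b. b < a) \<longrightarrow>
            Diff_level a = D_of (co_class (\<Union>b\<in>{b. b < a}. Diff_level b)))"
proof -
  have E: "Diff_level a = D_of (co_class (\<Union>b\<in>{b. b < a}. Diff_level b))" for a :: 'a
  proof
    show "Diff_level a \<subseteq> D_of (co_class (\<Union>b\<in>{b. b < a}. Diff_level b))"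
      using main_sub by blast
    have "co_class (\<Union>b\<in>{b. b < a}. Diff_level b) \<subseteq> Diff_level a"
    proof
      fix X assume "X \<in> co_class (\<Union>b\<in>{b. b < a}. Diff_level b)"
      then obtain Y b where Y: "X = - Y" "b < a" "Y \<in> Diff_level b" by (auto simp: co_class_def)
      obtain b' where b': "is_succ b b'" "b' \<le> a" using succ_ex[OF Y(2)] by blast
      have "- Y \<in> Diff_level b'" by (rule co_succ[OF b'(1) Y(3)])
      then show "X \<in> Diff_level a" using mono_level[OF b'(2)] Y(1) by blast
    qed
    then have "D_of (co_class (\<Union>b\<in>{b. b < a}. Diff_level b)) \<subseteq> D_of (Diff_level a)"
      by (rule D_of_mono)
    then show "D_of (co_class (\<Union>b\<in>{b. b < a}. Diff_level b)) \<subseteq> Diff_level a"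
      using D_of_closed[of a] by blast
  qed
  have P1: "\<forall>a a' :: 'a. is_succ a a' \<longrightarrow> Diff_level a' = D_of (co_class (Diff_level a))"
  proof (intro allI impI)
    fix a a' :: 'a assume s: "is_succ a a'"
    have "(\<Union>b\<in>{b. b < a'}. Diff_level b) = Diff_level a"
    proof
      show "(\<Union>b\<in>{b. b < a'}. Diff_level b) \<subseteq> Diff_level a"
      proof
        fix X assume "X \<in> (\<Union>b\<in>{b. b < a'}. Diff_level b)"
        then obtain b where "b < a'" "X \<in> Diff_level b" by blast
        then have "b \<le> a" using is_succ_less[OF s] by simp
        then show "X \<in> Diff_level a" using mono_level \<open>X \<in> Diff_level b\<close> by blast
      qed
      have "a < a'" using s by (simp add: is_succ_def)
      then show "Diff_level a \<subseteq> (\<Union>b\<in>{b. b < a'}. Diff_level b)" by blast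
    qed
    then show "Diff_level a' = D_of (co_class (Diff_level a))" using E[of a'] by simp
  qed
  have P2: "\<forall>a :: 'a. (\<exists>b. b < a) \<longrightarrow>
            Diff_level a = D_of (co_class (\<Union>b\<in>{b. b < a}. Diff_level b))"
    using E by blast
  show ?thesis by (rule conjI[OF P1 P2])
qed


end
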